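(* For any signature $\Sigma$, the map $r_{A_p(\Sigma)}:\mathbf N(T(\Sigma))\to\mathbb K\langle A_p(\Sigma)\rangle$ is injective.
   Context: $\mathbb K$ is a field of characteristic zero. A signature is a set $\Sigma$ with arity map $|\cdot|:\Sigma\to\mathbb N$. A $\Sigma$-term is the leaf $\bot$ or $s(t_1,\dots,t_n)$ with $s$ of arity $n$, $t_i$ terms; degree = number of internal nodes. A $\Sigma$-forest is a finite word of terms; reduced if no term is $\bot$. $\mathbf N(T(\Sigma))$ is the vector space (natural Hopf algebra of the free operad) with basis $E_f$ indexed by reduced $\Sigma$-forests $f$. Internal nodes of a forest $f$ are identified with $1,\dots,\deg f$ by left-to-right preorder; $d_f(i)$ is the decoration of $i$; $i\to^f_j i'$ means $i'$ is the $j$-th child of $i$; roots are the roots of the terms. A $\Sigma$-forest-like alphabet is a set $A$ with arbitrary: subset $R^A$, subsets $D^A_s$ ($s\in\Sigma$), binary relations $\to^A_j$ ($j\ge1$). $\mathbb K\langle A\rangle$: noncommutative polynomials with possibly infinite support and bounded degree. A word $w\in A^*$ is $A$-compatible with $f$ if it has length $\deg f$, $w(i)\in R^A$ for each root $i$, $w(i)\in D^A_{d_f(i)}$ for each node $i$, and $i\to^f_j i'$ implies $w(i)\to^A_j w(i')$; $r_A$ is the linear map with $r_A(E_f)=\sum_{w\in A^*}[w\ A\text{-compatible with }f]\,w$. The alphabet of positions $A_p(\Sigma)=\{a^s_u: s\in\Sigma,\ u\in\mathbb N^*\}$ has root relation $\{a^s_{0^\ell}:s\in\Sigma,\ell\in\mathbb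 N\}$, $D_s=\{a^s_u:u\in\mathbb N^*\}$, and $a^s_u\to_j a^{s'}_v$ iff $v=u\,j\,0^\ell$ for some $\ell\in\mathbb N$. *)

theory Defs
  imports Main
begin

text \<open>A signature is a type 's of symbols together with an arity map ar :: 's => nat.\<close>

datatype 's trm = Leaf | Node 's "'s trm list"

fun wf_trm :: "('s \<Rightarrow> nat) \<Rightarrow> 's trm \<Rightarrow> bool" where
  "wf_trm ar Leaf = True"
| "wf_trm ar (Node s ts) = (length ts = ar s \<and> (\<forall>t\<in>set ts. wf_trm ar t))"

type_synonym 's forest = "'s trm list"

definition wf_forest :: "('s \<Rightarrow> nat) \<Rightarrow> 's forest \<Rightarrow> bool" where
  "wf_forest ar f = (\<forall>t\<in>set f. wf_trm ar t)"

definition reduced :: "'s forest \<Rightarrow> bool" where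
  "reduced f = (\<forall>t\<in>set f. t \<noteq> Leaf)"

text \<open>Internal nodes in left-to-right preorder, each given by its path (list of
  1-based child indices; for a forest the first entry is the index of the tree)
  together with its decoration.\<close>

fun nodes_trm :: "'s trm \<Rightarrow> (nat list \<times> 's) list"
and nodes_list :: "nat \<Rightarrow> 's trm list \<Rightarrow> (nat list \<times> 's) list" where
  "nodes_trm Leaf = []"
| "nodes_trm (Node s ts) = ([], s) # nodes_list 1 ts"
| "nodes_list k [] = []"
| "nodes_list k (t # ts) = map (\<lambda>(p, d). (k # p, d)) (nodes_trm t) @ nodes_list (Suc k) ts"

definition nodes :: "'s forest \<Rightarrow> (nat list \<times> 's) list" where
  "nodes f = nodes_list 1 f"

text \<open>Node i (0-based here, i < deg f) is
  nodes f ! i; its decoration is snd (nodes f ! i); it is a root iff its path has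
  length 1; node i' is the j-th child of node i iff path i' = path i @ [j].\<close>

definition deg :: "'s forest \<Rightarrow> nat" where
  "deg f = length (nodes f)"

text \<open>An alphabet is given by a letter type 'a with RA (roots), DA s (decorations)
  and relA j (the relation ->_j).\<close>

definition compatible ::
  "'a set \<Rightarrow> ('s \<Rightarrow> 'a set) \<Rightarrow> (nat \<Rightarrow> 'a \<Rightarrow> 'a \<Rightarrow> bool) \<Rightarrow> 'a list \<Rightarrow> 's forest \<Rightarrow> bool" where
  "compatible RA DA relA w f \<longleftrightarrow>
     length w = deg f \<and>
     (\<forall>i<deg f. length (fst (nodes f ! i)) = 1 \<longrightarrow> w ! i \<in> RA) \<and>
     (\<forall>i<deg f. w ! i \<in> DA (snd (nodes f ! i))) \<and>
     (\<forall>i<deg f. \<forall>i'<deg f. \<forall>j. fst (nodes f ! i') = fst (nodes f ! i) @ [j]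
          \<longrightarrow> relA j (w ! i) (w ! i'))"

text \<open>N(T(Sigma)): finitely supported coefficient functions on reduced (well-formed)
  forests; c corresponds to sum_f c f * E_f.\<close>

definition NT :: "('s \<Rightarrow> nat) \<Rightarrow> ('s forest \<Rightarrow> 'k::field_char_0) set" where
  "NT ar = {c. finite {f. c f \<noteq> 0} \<and> (\<forall>f. c f \<noteq> 0 \<longrightarrow> wf_forest ar f \<and> reduced f)}"

text \<open>Noncommutative polynomials K<A> (possibly infinite support, bounded degree)
  are represented as coefficient functions 'a list => 'k. r_A is the linear
  extension of E_f |-> sum of compatible words.\<close>

definition rA ::
  "'a set \<Rightarrow> ('s \<Rightarrow> 'a set) \<Rightarrow> (nat \<Rightarrow> 'a \<Rightarrow> 'a \<Rightarrow> bool) \<Rightarrow>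
   ('s forest \<Rightarrow> 'k::field_char_0) \<Rightarrow> ('a list \<Rightarrow> 'k)" where
  "rA RA DA relA c = (\<lambda>w. \<Sum>f\<in>{f. c f \<noteq> 0}. c f * (if compatible RA DA relA w f then 1 else 0))"

text \<open>Letters a^s_u are pairs (s, u) with u a word over nat.\<close>

definition Ap_root :: "('s \<times> nat list) set" where
  "Ap_root = {(s, replicate l 0) | s l. True}"

definition Ap_dec :: "'s \<Rightarrow> ('s \<times> nat list) set" where
  "Ap_dec s = {(s, u) | u. True}"

definition Ap_rel :: "nat \<Rightarrow> ('s \<times> nat list) \<Rightarrow> ('s \<times> nat list) \<Rightarrow> bool" where
  "Ap_rel j a b \<longleftrightarrow> (\<exists>l. snd b = snd a @ [j] @ replicate l 0)"

end

theory Submission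
  imports Defs
begin

lemma nodes_list_nonempty: "\<forall>x\<in>set (nodes_list k ts). fst x \<noteq> []"
  by (induction ts arbitrary: k) auto

lemma nodes_zero_free:
  fixes t :: "'s trm" and ts :: "'s trm list"
  shows "(\<forall>x\<in>set (nodes_trm t). 0 \<notin> set (fst x))"
  "0 < k \<Longrightarrow> (\<forall>x\<in>set (nodes_list k ts). 0 \<notin> set (fst x))"
  by (induction t and k ts rule: nodes_trm_nodes_list.induct) auto

lemma mem_list:
  "(q, s) \<in> set (nodes_list k ts) \<longleftrightarrow>
   (\<exists>j p. q = j # p \<and> k \<le> j \<and> j < k + length ts \<and> (p, s) \<in> set (nodes_trm (ts ! (j - k))))"
proof (induction ts arbitrary: k)
  case Nil then show ?case by simp
next
  case (Cons t ts)
  show ?case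
  proof
    assume "(q, s) \<in> set (nodes_list k (t # ts))"
    then consider "\<exists>p. q = k # p \<and> (p,s) \<in> set (nodes_trm t)"
      | "(q, s) \<in> set (nodes_list (Suc k) ts)" by auto
    then show "\<exists>j p. q = j # p \<and> k \<le> j \<and> j < k + length (t # ts) \<and> (p, s) \<in> set (nodes_trm ((t # ts) ! (j - k)))"
    proof cases
      case 1 then show ?thesis by (cases q) auto
    next
      case 2
      then obtain j p where "q = j # p" "Suc k \<le> j" "j < Suc k + length ts" "(p, s) \<in> set (nodes_trm (ts ! (j - Suc k)))"
        using Cons.IH by blast
      then show ?thesis
        by (intro exI[of _ j] exI[of _ p]) (auto simp: Suc_diff_Suc[symmetric])
    qed
  next
    assume "\<exists>j p. q = j # p \<and> k \<le> j \<and> j < k + length (t # ts) \<and> (p, s) \<in> set (nodes_trm ((t # ts) ! (j - k)))"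
    then obtain j p where h: "q = j # p" "k \<le> j" "j < k + length (t#ts)" "(p, s) \<in> set (nodes_trm ((t#ts) ! (j - k)))"
      by blast
    show "(q, s) \<in> set (nodes_list k (t # ts))"
    proof (cases "j = k")
      case True with h show ?thesis by force
    next
      case False
      then have "Suc k \<le> j" using h by simp
      moreover have "(t#ts) ! (j - k) = ts ! (j - Suc k)"
        using \<open>Suc k \<le> j\<close> by (simp add: Suc_diff_Suc[symmetric] del: Suc_diff_Suc)
      ultimately have "(q,s) \<in> set (nodes_list (Suc k) ts)"
        using Cons.IH h by auto
      then show ?thesis by simp
    qed
  qed
qed

lemma parent_trm: "(p @ [j], d) \<in> set (nodes_trm t) \<Longrightarrow> \<exists>d'. (p, d') \<in> set (nodes_trm t)"
proof (induction t arbitrary: p)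
  case Leaf then show ?case by simp
next
  case (Node s ts)
  show ?case
  proof (cases p)
    case Nil then show ?thesis by auto
  next
    case (Cons j' p')
    then have "(j' # (p' @ [j]), d) \<in> set (nodes_list 1 ts)" using Node.prems by simp
    then have h: "1 \<le> j'" "j' < 1 + length ts" "(p' @ [j], d) \<in> set (nodes_trm (ts ! (j' - 1)))"
      unfolding mem_list by auto
    then have "ts ! (j' - 1) \<in> set ts" by auto
    then obtain d' where "(p', d') \<in> set (nodes_trm (ts ! (j' - 1)))" using Node.IH h by blast
    then have "(j' # p', d') \<in> set (nodes_list 1 ts)" unfolding mem_list using h by auto
    then show ?thesis using Cons by auto
  qed
qed

lemma parent_forest:
  assumes "(p @ [j], d) \<in> set (nodes f)" "p \<noteq> []"
  shows "\<exists>d'. (p, d') \<in> set (nodes f)"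
proof -
  obtain k p' where p: "p = k # p'" using assms(2) by (cases p) auto
  from assms(1) have "(k # (p' @ [j]), d) \<in> set (nodes_list 1 f)" unfolding nodes_def p by simp
  then have h: "1 \<le> k" "k < 1 + length f" "(p' @ [j], d) \<in> set (nodes_trm (f ! (k - 1)))"
    unfolding mem_list by auto
  then obtain d' where "(p', d') \<in> set (nodes_trm (f ! (k - 1)))" using parent_trm[OF h(3)] by blast
  then have "(k # p', d') \<in> set (nodes_list 1 f)" unfolding mem_list using h by auto
  then show ?thesis unfolding nodes_def p by auto
qed

definition canon :: "'s forest \<Rightarrow> ('s \<times> nat list) list" where
  "canon f = map (\<lambda>(p, d). (d, tl p)) (nodes f)"

lemma canon_concat_aux:
  "map (\<lambda>(p, d). (d, tl p)) (nodes_list k ts) = map (\<lambda>(p, d). (d, p)) (concat (map nodes_trm ts))"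
  by (induction ts arbitrary: k) (auto simp: case_prod_beta)

lemma canon_concat: "canon f = map (\<lambda>(p, d). (d, p)) (concat (map nodes_trm f))"
  unfolding canon_def nodes_def by (rule canon_concat_aux)

lemma term_inj:
  "wf_trm ar t \<Longrightarrow> wf_trm ar t' \<Longrightarrow> set (nodes_trm t) = set (nodes_trm t') \<Longrightarrow> t = t'"
proof (induction t arbitrary: t')
  case Leaf then show ?case by (cases t') auto
next
  case (Node s ts)
  then obtain s' ts' where t': "t' = Node s' ts'" by (cases t') auto
  have "([], s) \<in> set (nodes_trm (Node s ts))" by simp
  then have "([], s) \<in> set (nodes_trm t')" using Node.prems(3) by blast
  then have ss: "s = s'" using t' nodes_list_nonempty[of 1 ts'] by auto
  have len: "length ts = length ts'" using Node.prems t' ss by simp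
  have "\<forall>i<length ts. ts ! i = ts' ! i"
  proof (intro allI impI)
    fix i assume i: "i < length ts"
    have eq: "set (nodes_trm (ts ! i)) = set (nodes_trm (ts' ! i))"
    proof -
      have "\<And>p d. (p, d) \<in> set (nodes_trm (ts ! i)) \<longleftrightarrow> (Suc i # p, d) \<in> set (nodes_list 1 ts)"
        unfolding mem_list using i by auto
      moreover have "\<And>p d. (p, d) \<in> set (nodes_trm (ts' ! i)) \<longleftrightarrow> (Suc i # p, d) \<in> set (nodes_list 1 ts')"
        unfolding mem_list using i len by auto
      moreover have "\<And>q d. (q, d) \<in> set (nodes_list 1 ts) \<longleftrightarrow> (q, d) \<in> set (nodes_list 1 ts')"
      proof -
        fix q d
        show "(q, d) \<in> set (nodes_list 1 ts) \<longleftrightarrow> (q, d) \<in> set (nodes_list 1 ts')"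
          using Node.prems(3) t' nodes_list_nonempty[of 1 ts] nodes_list_nonempty[of 1 ts']
          by (cases q) (auto simp: set_eq_iff)
      qed
      ultimately show ?thesis by auto
    qed
    have "ts ! i \<in> set ts" using i by simp
    moreover have "wf_trm ar (ts ! i)" "wf_trm ar (ts' ! i)" using Node.prems t' i len by auto
    ultimately show "ts ! i = ts' ! i" using Node.IH eq by blast
  qed
  then show ?case using t' ss len by (simp add: list_eq_iff_nth_eq)
qed

lemma nodes_trm_Node_shape:
  "t \<noteq> Leaf \<Longrightarrow> \<exists>s rest. nodes_trm t = ([], s) # rest \<and> (\<forall>x\<in>set rest. fst x \<noteq> [])"
  by (cases t) (auto simp: nodes_list_nonempty)

lemma hd_ok: "reduced us \<Longrightarrow> concat (map nodes_trm us) = [] \<or> fst (hd (concat (map nodes_trm us))) = []"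
  by (cases us) (auto simp: reduced_def dest!: nodes_trm_Node_shape)

lemma tw_lemma:
  assumes a: "\<forall>x\<in>set r. fst x \<noteq> []" "reduced us"
  shows "takeWhile (\<lambda>x. fst x \<noteq> []) (r @ concat (map nodes_trm us)) = r \<and>
         dropWhile (\<lambda>x. fst x \<noteq> []) (r @ concat (map nodes_trm us)) = concat (map nodes_trm us)"
proof -
  have "takeWhile (\<lambda>x. fst x \<noteq> []) (concat (map nodes_trm us)) = [] \<and> dropWhile (\<lambda>x. fst x \<noteq> []) (concat (map nodes_trm us)) = concat (map nodes_trm us)"
  proof -
    have g: "\<And>L. L = [] \<or> fst (hd L) = [] \<Longrightarrow> takeWhile (\<lambda>x. fst x \<noteq> []) L = [] \<and> dropWhile (\<lambda>x. fst x \<noteq> []) L = L"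
      subgoal for L by (cases L) auto
      done
    show ?thesis by (rule g[OF hd_ok[OF a(2)]])
  qed
  then show ?thesis using a(1) by (simp add: takeWhile_append2 dropWhile_append2)
qed

lemma forest_inj:
  "wf_forest ar f \<Longrightarrow> reduced f \<Longrightarrow> wf_forest ar g \<Longrightarrow> reduced g \<Longrightarrow>
   concat (map nodes_trm f) = concat (map nodes_trm g) \<Longrightarrow> f = g"
proof (induction f arbitrary: g)
  case Nil
  then show ?case
    by (cases g) (auto simp: reduced_def dest!: nodes_trm_Node_shape)
next
  case (Cons t ts)
  have tL: "t \<noteq> Leaf" using Cons.prems by (simp add: reduced_def)
  obtain t' ts' where g: "g = t' # ts'"
    using Cons.prems tL nodes_trm_Node_shape[of t] by (cases g) auto
  have tL': "t' \<noteq> Leaf" using Cons.prems g by (simp add: reduced_def)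
  obtain s rest where sr: "nodes_trm t = ([], s) # rest" "\<forall>x\<in>set rest. fst x \<noteq> []"
    using nodes_trm_Node_shape[OF tL] by blast
  obtain s' rest' where sr': "nodes_trm t' = ([], s') # rest'" "\<forall>x\<in>set rest'. fst x \<noteq> []"
    using nodes_trm_Node_shape[OF tL'] by blast
  have ts_red: "reduced ts" "reduced ts'" using Cons.prems g by (auto simp: reduced_def)
  have eq: "rest @ concat (map nodes_trm ts) = rest' @ concat (map nodes_trm ts')" and "s = s'"
    using Cons.prems(5) g sr sr' by auto
  have "rest = rest'" using tw_lemma[OF sr(2) ts_red(1)] tw_lemma[OF sr'(2) ts_red(2)] eq by metis
  moreover have ceq: "concat (map nodes_trm ts) = concat (map nodes_trm ts')"
    using tw_lemma[OF sr(2) ts_red(1)] tw_lemma[OF sr'(2) ts_red(2)] eq by metis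
  ultimately have "nodes_trm t = nodes_trm t'" using sr sr' \<open>s = s'\<close> by simp
  then have "t = t'" using term_inj[of ar t t'] Cons.prems g by (auto simp: wf_forest_def)
  moreover have "ts = ts'" using Cons.IH[OF _ ts_red(1) _ ts_red(2) ceq] Cons.prems g
    by (auto simp: wf_forest_def)
  ultimately show ?case using g by simp
qed

lemma canon_inj:
  assumes "wf_forest ar f" "reduced f" "wf_forest ar g" "reduced g" "canon f = canon g"
  shows "f = g"
proof -
  have "map (\<lambda>(d, p). (p, d)) (canon f) = map (\<lambda>(d, p). (p, d)) (canon g)" using assms(5) by simp
  then have "concat (map nodes_trm f) = concat (map nodes_trm g)"
    unfolding canon_concat by (simp add: comp_def case_prod_beta)
  then show ?thesis using forest_inj assms by blast
qed

lemma canon_nth: "i < deg f \<Longrightarrow> canon f ! i = (snd (nodes f ! i), tl (fst (nodes f ! i)))"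
  unfolding canon_def deg_def by (simp add: case_prod_beta)

lemma len_canon: "length (canon f) = deg f"
  unfolding canon_def deg_def by simp

lemma path_ne: "i < deg f \<Longrightarrow> fst (nodes f ! i) \<noteq> []"
  using nodes_list_nonempty[of 1 f] unfolding deg_def nodes_def by auto

lemma path_zf: "i < deg f \<Longrightarrow> 0 \<notin> set (fst (nodes f ! i))"
  using nodes_zero_free(2)[of 1 f] unfolding deg_def nodes_def by auto

lemma canon_zf: "i < deg f \<Longrightarrow> 0 \<notin> set (snd (canon f ! i))"
  using path_zf[of i f] path_ne[of i f] by (cases "fst (nodes f ! i)") (auto simp: canon_nth)

lemma compat_self: "compatible Ap_root Ap_dec Ap_rel (canon f) f"
  unfolding compatible_def
proof (intro conjI allI impI)
  show "length (canon f) = deg f" by (rule len_canon)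
next
  fix i assume i: "i < deg f" "length (fst (nodes f ! i)) = 1"
  then have "tl (fst (nodes f ! i)) = replicate 0 0" by (cases "fst (nodes f ! i)") auto
  then show "canon f ! i \<in> Ap_root" using i by (auto simp: canon_nth Ap_root_def)
next
  fix i assume i: "i < deg f"
  then show "canon f ! i \<in> Ap_dec (snd (nodes f ! i))" by (auto simp: canon_nth Ap_dec_def)
next
  fix i i' j assume i: "i < deg f" "i' < deg f" "fst (nodes f ! i') = fst (nodes f ! i) @ [j]"
  then have "tl (fst (nodes f ! i')) = tl (fst (nodes f ! i)) @ [j] @ replicate 0 0"
    using path_ne[OF i(1)] by (cases "fst (nodes f ! i)") auto
  then show "Ap_rel j (canon f ! i) (canon f ! i')" using i by (auto simp: canon_nth Ap_rel_def)
qed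

lemma replicate_zf: "0 \<notin> set (replicate l (0::nat)) \<Longrightarrow> l = 0"
  by (cases l) auto

lemma compat_canon:
  assumes c: "compatible Ap_root Ap_dec Ap_rel (canon f) g"
  shows "canon g = canon f"
proof -
  let ?w = "canon f"
  have len: "deg g = deg f" using c len_canon[of f] unfolding compatible_def by simp
  have cR: "\<And>i. i < deg g \<Longrightarrow> length (fst (nodes g ! i)) = 1 \<Longrightarrow> ?w ! i \<in> Ap_root"
    using c unfolding compatible_def by blast
  have cD: "\<And>i. i < deg g \<Longrightarrow> ?w ! i \<in> Ap_dec (snd (nodes g ! i))"
    using c unfolding compatible_def by blast
  have cE: "\<And>i i' j. i < deg g \<Longrightarrow> i' < deg g \<Longrightarrow> fst (nodes g ! i') = fst (nodes g ! i) @ [j] \<Longrightarrow> Ap_rel j (?w ! i) (?w ! i')"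
    using c unfolding compatible_def by blast
  have key: "\<forall>i<deg g. length (fst (nodes g ! i)) = n \<longrightarrow> snd (?w ! i) = tl (fst (nodes g ! i))" for n
  proof (induction n rule: less_induct)
    case (less n)
    show ?case
    proof (intro allI impI)
      fix i assume i: "i < deg g" "length (fst (nodes g ! i)) = n"
      have zf: "0 \<notin> set (snd (?w ! i))" using canon_zf[of i f] i len by simp
      show "snd (?w ! i) = tl (fst (nodes g ! i))"
      proof (cases "n = 1")
        case True
        then have "?w ! i \<in> Ap_root" using cR i by blast
        then obtain l where l: "snd (?w ! i) = replicate l 0" unfolding Ap_root_def by auto
        then have "0 \<notin> set (replicate l (0::nat))" using zf by simp
        then have "l = 0" by (rule replicate_zf)
        then have "snd (?w ! i) = []" using l by simp
        moreover have "length (fst (nodes g ! i)) = 1" using i True by simp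
        then have "tl (fst (nodes g ! i)) = []" by (cases "fst (nodes g ! i)") auto
        ultimately show ?thesis by simp
      next
        case False
        define p where "p = fst (nodes g ! i)"
        have "p \<noteq> []" using path_ne[OF i(1)] p_def by simp
        have "length p \<noteq> 1" using False i(2) p_def by simp
        moreover have "length p \<noteq> 0" using \<open>p \<noteq> []\<close> by simp
        ultimately have n2: "length p \<ge> 2" by linarith
        define q where "q = butlast p"
        define j where "j = last p"
        have pq: "p = q @ [j]" using \<open>p \<noteq> []\<close> q_def j_def by simp
        have qne: "q \<noteq> []" using n2 pq by auto
        have "nodes g ! i \<in> set (nodes g)" using i(1) unfolding deg_def by (rule nth_mem)
        then have "(p, snd (nodes g ! i)) \<in> set (nodes g)" unfolding p_def by simp
        then obtain d' where "(q, d') \<in> set (nodes g)" using parent_forest[of q j _ g] pq qne by auto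
        then obtain i0 where i0: "i0 < deg g" "nodes g ! i0 = (q, d')"
          unfolding deg_def in_set_conv_nth by blast
        have lq: "length q < n" using pq i(2) p_def by simp
        have IH: "snd (?w ! i0) = tl q" using less.IH[OF lq] i0 by auto
        have "fst (nodes g ! i) = fst (nodes g ! i0) @ [j]" using i0 pq p_def by simp
        then have "Ap_rel j (?w ! i0) (?w ! i)" using cE i0(1) i(1) by blast
        then obtain l where l: "snd (?w ! i) = snd (?w ! i0) @ [j] @ replicate l 0"
          unfolding Ap_rel_def by auto
        have "l = 0" using l zf by (cases l) auto
        then show ?thesis using l IH pq p_def qne by (cases q) auto
      qed
    qed
  qed
  show ?thesis
  proof (rule nth_equalityI)
    show "length (canon g) = length (canon f)" using len by (simp add: len_canon)
  next
    fix i assume "i < length (canon g)"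
    then have i: "i < deg g" by (simp add: len_canon)
    have "?w ! i \<in> Ap_dec (snd (nodes g ! i))" using cD i by blast
    then have "fst (?w ! i) = snd (nodes g ! i)" unfolding Ap_dec_def by auto
    moreover have "snd (?w ! i) = tl (fst (nodes g ! i))" using key i by blast
    ultimately show "canon g ! i = canon f ! i" using i by (simp add: canon_nth prod_eq_iff)
  qed
qed

lemma rA_canon:
  fixes c :: "'s forest \<Rightarrow> 'k::field_char_0"
  assumes c: "c \<in> NT ar" and f: "wf_forest ar f" "reduced f"
  shows "rA Ap_root Ap_dec Ap_rel c (canon f) = c f"
proof -
  let ?S = "{f. c f \<noteq> 0}"
  have fin: "finite ?S" using c unfolding NT_def by auto
  have "\<And>g. g \<in> ?S \<Longrightarrow> c g * (if compatible Ap_root Ap_dec Ap_rel (canon f) g then 1 else 0)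
        = (if g = f then c g else 0)"
  proof -
    fix g assume g: "g \<in> ?S"
    then have "wf_forest ar g" "reduced g" using c unfolding NT_def by auto
    then have "compatible Ap_root Ap_dec Ap_rel (canon f) g \<longleftrightarrow> g = f"
      using compat_self[of f] compat_canon[of f g] canon_inj[of ar g f] f by auto
    then show "c g * (if compatible Ap_root Ap_dec Ap_rel (canon f) g then 1 else 0) = (if g = f then c g else 0)"
      by simp
  qed
  then have "rA Ap_root Ap_dec Ap_rel c (canon f) = (\<Sum>g\<in>?S. if g = f then c g else 0)"
    unfolding rA_def by (intro sum.cong) auto
  also have "\<dots> = c f" using fin by (simp add: sum.delta')
  finally show ?thesis .
qed

theorem proposition4p7:
  fixes ar :: "'s \<Rightarrow> nat"
  shows "inj_on (rA Ap_root Ap_dec Ap_rel :: ('s forest \<Rightarrow> 'k::field_char_0) \<Rightarrow> _)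
           (NT ar)"
proof (rule inj_onI)
  fix c1 c2 :: "'s forest \<Rightarrow> 'k"
  assume c1: "c1 \<in> NT ar" and c2: "c2 \<in> NT ar"
    and eq: "rA Ap_root Ap_dec Ap_rel c1 = rA Ap_root Ap_dec Ap_rel c2"
  show "c1 = c2"
  proof
    fix f
    show "c1 f = c2 f"
    proof (cases "c1 f \<noteq> 0 \<or> c2 f \<noteq> 0")
      case True
      then have "wf_forest ar f" "reduced f" using c1 c2 unfolding NT_def by auto
      then show ?thesis using rA_canon[OF c1] rA_canon[OF c2] eq by metis
    next
      case False then show ?thesis by simp
    qed
  qed
qed

end
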